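(* Let $X,Y$ be real Banach spaces with a bilinear map $\langle\cdot,\cdot\rangle\colon X\times Y\to\mathbb{R}$ satisfying (B1)–(B5) below. Let $\mathcal{I}\subset\mathbb{N}$ be infinite, $n\in\mathbb{N}$, $L\in2\mathbb{N}$ and $\eta>0$. Then for all bounded sequences $(x_j)$ in $X$ and $(y_j)$ in $Y$ there exists an infinite set $\Lambda\subset\mathcal{I}$ such that $$\sup\Bigl\{\Bigl|\Bigl\langle\sum_{k\in\mathcal{B}}\varepsilon_kx_k,y_j\Bigr\rangle\Bigr|:\mathcal{B}\subset\Lambda,\ |\mathcal{B}|=L,\ \varepsilon\in\mathcal{E}(\mathcal{B}),\ 1\le j\le n\Bigr\}\le\eta,$$ $$\sup\Bigl\{\Bigl|\Bigl\langle x_j,\sum_{k\in\mathcal{B}}\varepsilon_ky_k\Bigr\rangle\Bigr|:\mathcal{B}\subset\Lambda,\ |\mathcal{B}|=L,\ \varepsilon\in\mathcal{E}(\mathcal{B}),\ 1\le j\le n\Bigr\}\le\eta,$$ where $\mathcal{E}(\mathcal{B})=\{(\varepsilon_k)\in\{\pm1\}^{\mathcal{B}}:\sum_{k\in\mathcal{B}}\varepsilon_k=0\}$.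
   Context: Standing assumptions: (B1) if $\langle x,y\rangle=0$ for all $y\in Y$ then $x=0$; (B2) if $\langle x,y\rangle=0$ for all $x\in X$ then $y=0$; (B3) there is $C_d>0$ with $|\langle x,y\rangle|\le C_d\|x\|\|y\|$; and there are normalized sequences $(e_j)\subset X$, $(f_j)\subset Y$ with (B4) $\langle e_j,f_k\rangle=1$ if $j=k$ and $0$ otherwise, and (B5) every $x\in X$ has the unique representation $x=\sum_j\langle x,f_j\rangle e_j$ converging in $\sigma(X,Y)$, the locally convex topology on $X$ generated by the seminorms $x\mapsto|\langle x,y\rangle|$, $y\in Y$. *)

theory Defs
  imports "HOL-Analysis.Analysis"
begin

text \<open>Standing assumptions (B1)--(B5) on a bilinear pairing p between real Banach
spaces, with a normalized biorthogonal system (e, f).  Convergence in sigma(X,Y)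
of a series means convergence of the pairing of partial sums with every y.\<close>

definition dual_pair_with_basis ::
  "('a::banach \<Rightarrow> 'b::banach \<Rightarrow> real) \<Rightarrow> (nat \<Rightarrow> 'a) \<Rightarrow> (nat \<Rightarrow> 'b) \<Rightarrow> bool" where
  "dual_pair_with_basis p e f \<longleftrightarrow>
     bilinear p \<and>
     (\<forall>x. (\<forall>y. p x y = 0) \<longrightarrow> x = 0) \<and>
     (\<forall>y. (\<forall>x. p x y = 0) \<longrightarrow> y = 0) \<and>
     (\<exists>C>0. \<forall>x y. \<bar>p x y\<bar> \<le> C * norm x * norm y) \<and>
     (\<forall>j. norm (e j) = 1) \<and> (\<forall>j. norm (f j) = 1) \<and>
     (\<forall>j k. p (e j) (f k) = (if j = k then 1 else 0)) \<and>
     (\<forall>x y. (\<lambda>N. p (\<Sum>j<N. p x (f j) *\<^sub>R e j) y) \<longlonglongrightarrow> p x y) \<and>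
     (\<forall>x a. (\<forall>y. (\<lambda>N. p (\<Sum>j<N. a j *\<^sub>R e j) y) \<longlonglongrightarrow> p x y)
            \<longrightarrow> (\<forall>j. a j = p x (f j)))"

definition balanced_signs :: "nat set \<Rightarrow> (nat \<Rightarrow> real) set" where
  "balanced_signs B = {\<epsilon>. (\<forall>k\<in>B. \<epsilon> k = 1 \<or> \<epsilon> k = -1) \<and> (\<Sum>k\<in>B. \<epsilon> k) = 0}"

end

theory Submission
  imports Defs
begin

lemma balanced_sum_bound:
  fixes a :: "nat \<Rightarrow> real"
  assumes fin: "finite B" and eps: "\<epsilon> \<in> balanced_signs B"
    and osc: "\<And>k k'. k \<in> B \<Longrightarrow> k' \<in> B \<Longrightarrow> \<bar>a k - a k'\<bar> \<le> \<delta>"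
  shows "\<bar>\<Sum>k\<in>B. \<epsilon> k * a k\<bar> \<le> real (card B) * \<delta>"
proof (cases "B = {}")
  case True then show ?thesis by simp
next
  case False
  then obtain k0 where k0: "k0 \<in> B" by blast
  have s: "(\<Sum>k\<in>B. \<epsilon> k) = 0" and pm: "\<And>k. k \<in> B \<Longrightarrow> \<epsilon> k = 1 \<or> \<epsilon> k = -1"
    using eps by (auto simp: balanced_signs_def)
  have "(\<Sum>k\<in>B. \<epsilon> k * a k) = (\<Sum>k\<in>B. \<epsilon> k * (a k - a k0)) + (\<Sum>k\<in>B. \<epsilon> k) * a k0"
    by (simp add: algebra_simps sum.distrib sum_distrib_right sum_subtractf sum_distrib_left)
  also have "\<dots> = (\<Sum>k\<in>B. \<epsilon> k * (a k - a k0))" using s by simp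
  finally have eq: "(\<Sum>k\<in>B. \<epsilon> k * a k) = (\<Sum>k\<in>B. \<epsilon> k * (a k - a k0))" .
  have "\<bar>\<Sum>k\<in>B. \<epsilon> k * (a k - a k0)\<bar> \<le> (\<Sum>k\<in>B. \<bar>\<epsilon> k * (a k - a k0)\<bar>)"
    by (rule sum_abs)
  also have "\<dots> \<le> (\<Sum>k\<in>B. \<delta>)"
  proof (rule sum_mono)
    fix k assume "k \<in> B"
    then have "\<bar>\<epsilon> k\<bar> = 1" "\<bar>a k - a k0\<bar> \<le> \<delta>" using pm[of k] osc[of k k0] k0 by auto
    then show "\<bar>\<epsilon> k * (a k - a k0)\<bar> \<le> \<delta>" by (simp add: abs_mult)
  qed
  finally show ?thesis using eq by simp
qed

lemma floor_eq_close:
  fixes u v \<delta> :: real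
  assumes "\<delta> > 0" "floor (u / \<delta>) = floor (v / \<delta>)"
  shows "\<bar>u - v\<bar> \<le> \<delta>"
proof -
  have "\<bar>u / \<delta> - v / \<delta>\<bar> < 1"
  proof -
    have e: "of_int (floor (u/\<delta>)) = (of_int (floor (v/\<delta>)) :: real)" using assms(2) by simp
    show ?thesis using floor_correct[of "u/\<delta>"] floor_correct[of "v/\<delta>"] e
      unfolding abs_less_iff by linarith
  qed
  then have "\<bar>(u - v) / \<delta>\<bar> < 1" by (simp add: diff_divide_distrib)
  moreover have "\<bar>(u - v) / \<delta>\<bar> = \<bar>u - v\<bar> / \<delta>" using assms(1) by simp
  ultimately have "\<bar>u - v\<bar> / \<delta> < 1" by metis
  then have "\<bar>u - v\<bar> < 1 * \<delta>" by (simp only: pos_divide_less_eq[OF assms(1)])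
  then show ?thesis by simp
qed

theorem lemma3p1:
  fixes p :: "'a::banach \<Rightarrow> 'b::banach \<Rightarrow> real"
    and e :: "nat \<Rightarrow> 'a" and f :: "nat \<Rightarrow> 'b"
    and I :: "nat set" and n L :: nat and \<eta> :: real
    and x :: "nat \<Rightarrow> 'a" and y :: "nat \<Rightarrow> 'b"
  assumes "dual_pair_with_basis p e f"
    and "infinite I" and "even L" and "\<eta> > 0"
    and "bounded (range x)" and "bounded (range y)"
  shows "\<exists>\<Lambda>. \<Lambda> \<subseteq> I \<and> infinite \<Lambda> \<and>
     (\<forall>B \<epsilon> j. B \<subseteq> \<Lambda> \<and> finite B \<and> card B = L \<and> \<epsilon> \<in> balanced_signs B \<and> 1 \<le> j \<and> j \<le> n
        \<longrightarrow> \<bar>p (\<Sum>k\<in>B. \<epsilon> k *\<^sub>R x k) (y j)\<bar> \<le> \<eta>) \<and>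
     (\<forall>B \<epsilon> j. B \<subseteq> \<Lambda> \<and> finite B \<and> card B = L \<and> \<epsilon> \<in> balanced_signs B \<and> 1 \<le> j \<and> j \<le> n
        \<longrightarrow> \<bar>p (x j) (\<Sum>k\<in>B. \<epsilon> k *\<^sub>R y k)\<bar> \<le> \<eta>)"
proof -
  have bil: "bilinear p" and "\<exists>C>0. \<forall>u v. \<bar>p u v\<bar> \<le> C * norm u * norm v"
    using assms(1) unfolding dual_pair_with_basis_def by blast+
  then obtain C where C: "C > 0" "\<And>u v. \<bar>p u v\<bar> \<le> C * norm u * norm v" by blast
  obtain Mx where Mx: "\<And>k. norm (x k) \<le> Mx" using assms(5) by (meson bounded_iff rangeI)
  obtain My where My: "\<And>k. norm (y k) \<le> My" using assms(6) by (meson bounded_iff rangeI)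
  have Mx0: "Mx \<ge> 0" using Mx[of 0] norm_ge_zero[of "x 0"] by linarith
  have My0: "My \<ge> 0" using My[of 0] norm_ge_zero[of "y 0"] by linarith
  define M where "M = C * Mx * My"
  have pb: "\<bar>p (x k) (y j)\<bar> \<le> M" for k j
  proof -
    have "C * norm (x k) * norm (y j) \<le> C * Mx * My"
    proof -
      have "norm (x k) * norm (y j) \<le> Mx * My"
        using Mx[of k] My[of j] Mx0 by (intro mult_mono) auto
      then show ?thesis using C(1) by (simp add: mult.assoc mult_left_mono)
    qed
    then show ?thesis using C(2)[of "x k" "y j"] unfolding M_def by linarith
  qed
  define \<delta> where "\<delta> = \<eta> / (real L + 1)"
  have \<delta>0: "\<delta> > 0" using assms(4) unfolding \<delta>_def by simp
  have L\<delta>: "real L * \<delta> \<le> \<eta>"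
  proof -
    have "real L * \<delta> = \<eta> * (real L / (real L + 1))" unfolding \<delta>_def by simp
    also have "\<dots> \<le> \<eta> * 1" using assms(4) by (intro mult_left_mono) auto
    finally show ?thesis by simp
  qed
  define fl where "fl = (\<lambda>t::real. floor (t / \<delta>))"
  define g where "g = (\<lambda>k. map (\<lambda>j. (fl (p (x k) (y j)), fl (p (x j) (y k)))) [1..<n+1])"
  define N where "N = ceiling (M / \<delta>) + 1"
  define S where "S = {-N..N} \<times> {-N..N}"
  have flb: "fl t \<in> {-N..N}" if "\<bar>t\<bar> \<le> M" for t
  proof -
    have ad: "\<bar>t / \<delta>\<bar> = \<bar>t\<bar> / \<delta>" using \<delta>0 by simp
    have "\<bar>t / \<delta>\<bar> \<le> M / \<delta>" unfolding ad using that \<delta>0 by (rule divide_right_mono[OF _ less_imp_le])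
    have a: "of_int (fl t) \<le> t / \<delta>" "t / \<delta> < of_int (fl t) + 1"
      unfolding fl_def by (simp_all add: of_int_floor_le)
    have b: "M / \<delta> \<le> of_int (ceiling (M / \<delta>))" by (rule le_of_int_ceiling)
    have "of_int (fl t) \<le> (of_int N :: real)" "(of_int (- N) :: real) \<le> of_int (fl t)"
    proof -
      have nn: "(of_int N :: real) = of_int (ceiling (M / \<delta>)) + 1" "(of_int (- N) :: real) = - (of_int (ceiling (M / \<delta>)) + 1)"
        unfolding N_def by simp_all
      show "of_int (fl t) \<le> (of_int N :: real)" "(of_int (- N) :: real) \<le> of_int (fl t)"
        unfolding nn using a b \<open>\<bar>t / \<delta>\<bar> \<le> M / \<delta>\<close> unfolding abs_le_iff by linarith+
    qed
    then show ?thesis by (simp only: atLeastAtMost_iff of_int_le_iff)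
  qed
  have "g ` I \<subseteq> {xs. set xs \<subseteq> S \<and> length xs = n}"
  proof
    fix z assume "z \<in> g ` I"
    then obtain k where z: "z = g k" by blast
    have "set (g k) \<subseteq> S"
    proof
      fix w assume "w \<in> set (g k)"
      then obtain j where w: "w = (fl (p (x k) (y j)), fl (p (x j) (y k)))" unfolding g_def by auto
      show "w \<in> S" unfolding w S_def using flb[OF pb[of k j]] flb[OF pb[of j k]] by (rule SigmaI)
    qed
    then show "z \<in> {xs. set xs \<subseteq> S \<and> length xs = n}" unfolding z by (simp add: g_def)
  qed
  then have "finite (g ` I)"
    by (rule finite_subset) (auto simp: S_def intro: finite_lists_length_eq)
  from pigeonhole_infinite[OF assms(2) this] obtain k0 where
    k0: "k0 \<in> I" "infinite {k\<in>I. g k = g k0}" by blast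
  define \<Lambda> where "\<Lambda> = {k\<in>I. g k = g k0}"
  have gl: "g k = g k'" if "k \<in> \<Lambda>" "k' \<in> \<Lambda>" for k k' using that unfolding \<Lambda>_def by simp
  have fleq: "fl (p (x k) (y j)) = fl (p (x k') (y j)) \<and> fl (p (x j) (y k)) = fl (p (x j) (y k'))"
    if "k \<in> \<Lambda>" "k' \<in> \<Lambda>" "1 \<le> j" "j \<le> n" for k k' j
  proof -
    have "g k ! (j - 1) = g k' ! (j - 1)" using gl[OF that(1,2)] by simp
    moreover have "g m ! (j - 1) = (fl (p (x m) (y j)), fl (p (x j) (y m)))" for m
    proof -
      have "j - 1 < length [1..<n+1]" "[1..<n+1] ! (j - 1) = j" using that(3,4) by (simp_all del: upt_Suc)
      then show ?thesis unfolding g_def by (simp del: upt_Suc)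
    qed
    ultimately show ?thesis by simp
  qed
  have lin1: "p (\<Sum>k\<in>B. \<epsilon> k *\<^sub>R x k) v = (\<Sum>k\<in>B. \<epsilon> k * p (x k) v)" for B \<epsilon> v
  proof -
    have l: "linear (\<lambda>u. p u v)" using bil unfolding bilinear_def by blast
    show ?thesis by (simp only: linear_sum[OF l] linear_scale[OF l] real_scaleR_def)
  qed
  have lin2: "p u (\<Sum>k\<in>B. \<epsilon> k *\<^sub>R y k) = (\<Sum>k\<in>B. \<epsilon> k * p u (y k))" for B \<epsilon> u
  proof -
    have l: "linear (\<lambda>v. p u v)" using bil unfolding bilinear_def by blast
    show ?thesis by (simp only: linear_sum[OF l] linear_scale[OF l] real_scaleR_def)
  qed
  show ?thesis
  proof (intro exI conjI allI impI)
    show "\<Lambda> \<subseteq> I" unfolding \<Lambda>_def by auto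
    show "infinite \<Lambda>" using k0(2) unfolding \<Lambda>_def .
  next
    fix B \<epsilon> j
    assume h: "B \<subseteq> \<Lambda> \<and> finite B \<and> card B = L \<and> \<epsilon> \<in> balanced_signs B \<and> 1 \<le> j \<and> j \<le> n"
    have osc: "\<bar>p (x k) (y j) - p (x k') (y j)\<bar> \<le> \<delta>" if "k \<in> B" "k' \<in> B" for k k'
    proof -
      have kk: "k \<in> \<Lambda>" "k' \<in> \<Lambda>" using h that by auto
      have "fl (p (x k) (y j)) = fl (p (x k') (y j))" using fleq[OF kk, of j] h by blast
      then show ?thesis unfolding fl_def by (rule floor_eq_close[OF \<delta>0])
    qed
    have "\<bar>\<Sum>k\<in>B. \<epsilon> k * p (x k) (y j)\<bar> \<le> real (card B) * \<delta>"
      using h by (intro balanced_sum_bound[OF _ _ osc]) auto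
    moreover have "card B = L" using h by blast
    ultimately have "\<bar>p (\<Sum>k\<in>B. \<epsilon> k *\<^sub>R x k) (y j)\<bar> \<le> real L * \<delta>" by (simp only: lin1)
    then show "\<bar>p (\<Sum>k\<in>B. \<epsilon> k *\<^sub>R x k) (y j)\<bar> \<le> \<eta>" using L\<delta> by linarith
  next
    fix B \<epsilon> j
    assume h: "B \<subseteq> \<Lambda> \<and> finite B \<and> card B = L \<and> \<epsilon> \<in> balanced_signs B \<and> 1 \<le> j \<and> j \<le> n"
    have osc: "\<bar>p (x j) (y k) - p (x j) (y k')\<bar> \<le> \<delta>" if "k \<in> B" "k' \<in> B" for k k'
    proof -
      have kk: "k \<in> \<Lambda>" "k' \<in> \<Lambda>" using h that by auto
      have "fl (p (x j) (y k)) = fl (p (x j) (y k'))" using fleq[OF kk, of j] h by blast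
      then show ?thesis unfolding fl_def by (rule floor_eq_close[OF \<delta>0])
    qed
    have "\<bar>\<Sum>k\<in>B. \<epsilon> k * p (x j) (y k)\<bar> \<le> real (card B) * \<delta>"
      using h by (intro balanced_sum_bound[OF _ _ osc]) auto
    moreover have "card B = L" using h by blast
    ultimately have "\<bar>p (x j) (\<Sum>k\<in>B. \<epsilon> k *\<^sub>R y k)\<bar> \<le> real L * \<delta>" by (simp only: lin2)
    then show "\<bar>p (x j) (\<Sum>k\<in>B. \<epsilon> k *\<^sub>R y k)\<bar> \<le> \<eta>" using L\<delta> by linarith
  qed
qed

end
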